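(* Let $\mathcal A\subset\mathbb{R}$ be a finite, non-empty set with $|\mathcal A+\mathcal A|=K|\mathcal A|$ for some $K\ge 1$. Then \[ \sup_{n\in\mathbb{Z}} r_{\mathcal A}(n)\le r_{\mathcal A}(0)\ll K^2|\mathcal A|^2\log(2|\mathcal A|) \qquad\text{and}\qquad I_3(\mathcal A)\ll K^4|\mathcal A|^8(\log(2|\mathcal A|))^2, \] with absolute implied constants.
   Context: $\mathcal A+\mathcal A=\{a+b:a,b\in\mathcal A\}$. For $n\in\mathbb{Z}$, $r_{\mathcal A}(n)$ is the number of $(a_1,a_2,a_3,a_4)\in\mathcal A^4$ with $a_1a_2-a_3a_4=n$, and $I_3(\mathcal A)=\sum_{n\in\mathbb{Z}} r_{\mathcal A}(n)^3$. *)

theory Defs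
  imports Complex_Main
begin

definition sumset :: "real set \<Rightarrow> real set" where
  "sumset A = {a + b | a b. a \<in> A \<and> b \<in> A}"

definition rA :: "real set \<Rightarrow> int \<Rightarrow> nat" where
  "rA A n = card {(a1, a2, a3, a4). a1 \<in> A \<and> a2 \<in> A \<and> a3 \<in> A \<and> a4 \<in> A
                  \<and> a1 * a2 - a3 * a4 = real_of_int n}"

text \<open>I_3(A) = sum over all integers n of r_A(n)^3; only the finitely many n with
  r_A(n) nonzero contribute.\<close>
definition I3 :: "real set \<Rightarrow> nat" where
  "I3 A = (\<Sum>n\<in>{n::int. rA A n \<noteq> 0}. rA A n ^ 3)"

end

theory Submission
  imports Defs
begin

lemma finite_sumset: "finite B \<Longrightarrow> finite (sumset B)"
proof -
  assume "finite B"
  have "sumset B = (\<lambda>(a,b). a+b) ` (B \<times> B)" unfolding sumset_def by auto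
  then show ?thesis using \<open>finite B\<close> by simp
qed

definition Rl :: "real set \<Rightarrow> real set \<Rightarrow> real \<Rightarrow> (real \<times> real) set" where
  "Rl B D l = {(x,y). x \<in> B \<and> y \<in> D \<and> y = l * x}"

lemma Rl_sub: "Rl B D l \<subseteq> (\<lambda>x. (x, l*x)) ` B"
  unfolding Rl_def by auto

lemma finite_Rl: "finite B \<Longrightarrow> finite (Rl B D l)"
  using Rl_sub by (meson finite_imageI finite_subset)

lemma card_Rl: "finite B \<Longrightarrow> card (Rl B D l) \<le> card B"
  by (meson Rl_sub card_image_le card_mono finite_imageI order_trans)

lemma geo:
  assumes fB: "finite B" and fD: "finite D" and pos: "B \<subseteq> {0<..}"
    and fL: "finite L" and big: "\<forall>l\<in>L. t \<le> card (Rl B D l)"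
  shows "(card L - 1) * t^2 \<le> card (sumset B) * card (sumset D)"
proof (cases "L = {}")
  case True then show ?thesis by simp
next
  case False
  define mx where "mx = Max L"
  have mxL: "mx \<in> L" using False fL mx_def by simp
  define L0 where "L0 = L - {mx}"
  define nxt where "nxt l = Min {\<mu>\<in>L. l < \<mu>}" for l
  have nxt: "nxt l \<in> L \<and> l < nxt l \<and> (\<forall>\<mu>\<in>L. l < \<mu> \<longrightarrow> nxt l \<le> \<mu>)" if "l \<in> L0" for l
  proof -
    have "l < mx" using that L0_def mx_def fL by (simp add: order_le_neq_trans)
    then have ne: "{\<mu>\<in>L. l < \<mu>} \<noteq> {}" using mxL by auto
    have fin: "finite {\<mu>\<in>L. l < \<mu>}" using fL by simp
    show ?thesis using Min_in[OF fin ne] Min_le[OF fin] unfolding nxt_def by auto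
  qed
  define X where "X = (SIGMA l:L0. Rl B D l \<times> Rl B D (nxt l))"
  define \<phi> where "\<phi> = (\<lambda>(l::real, (p::real\<times>real), (q::real\<times>real)). (fst p + fst q, snd p + snd q))"
  have fL0: "finite L0" using fL L0_def by simp
  have fX: "finite X" unfolding X_def using fL0 finite_Rl[OF fB] by auto
  have img: "\<phi> ` X \<subseteq> sumset B \<times> sumset D"
    unfolding X_def \<phi>_def Rl_def sumset_def by fastforce
  have inj: "inj_on \<phi> X"
  proof (rule inj_onI)
    fix u v assume u: "u \<in> X" and v: "v \<in> X" and e: "\<phi> u = \<phi> v"
    obtain l x1 x2 where u1: "u = (l, (x1, l*x1), (x2, nxt l * x2))" and ul: "l \<in> L0"
        and x1: "x1 \<in> B" and x2: "x2 \<in> B"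
      using u unfolding X_def Rl_def by auto
    obtain l' y1 y2 where v1: "v = (l', (y1, l'*y1), (y2, nxt l' * y2))" and vl: "l' \<in> L0"
        and y1: "y1 \<in> B" and y2: "y2 \<in> B"
      using v unfolding X_def Rl_def by auto
    have x1p: "x1 > 0" and x2p: "x2 > 0" and y1p: "y1 > 0" and y2p: "y2 > 0"
      using x1 x2 y1 y2 pos by auto
    have s1: "x1 + x2 = y1 + y2" and s2: "l*x1 + nxt l * x2 = l'*y1 + nxt l' * y2"
      using e u1 v1 unfolding \<phi>_def by auto
    have nl: "nxt l \<in> L" "l < nxt l" "\<forall>\<mu>\<in>L. l < \<mu> \<longrightarrow> nxt l \<le> \<mu>" using nxt[OF ul] by auto
    have nl': "nxt l' \<in> L" "l' < nxt l'" "\<forall>\<mu>\<in>L. l' < \<mu> \<longrightarrow> nxt l' \<le> \<mu>" using nxt[OF vl] by auto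
    have lo: "l * (x1+x2) < l*x1 + nxt l * x2"
      using nl(2) x2p by (simp add: distrib_left)
    have hi: "l*x1 + nxt l * x2 < nxt l * (x1+x2)"
      using nl(2) x1p by (simp add: distrib_left)
    have lo': "l' * (y1+y2) < l'*y1 + nxt l' * y2"
      using nl'(2) y2p by (simp add: distrib_left)
    have hi': "l'*y1 + nxt l' * y2 < nxt l' * (y1+y2)"
      using nl'(2) y1p by (simp add: distrib_left)
    have sp: "x1 + x2 > 0" using x1p x2p by simp
    have ll: "l = l'"
    proof (rule ccontr)
      assume "l \<noteq> l'"
      then consider "l < l'" | "l' < l" by linarith
      then show False
      proof cases
        case 1
        have "l' \<in> L" using vl L0_def by auto
        then have "nxt l \<le> l'" using nl(3) 1 by auto
        then have "nxt l * (x1+x2) \<le> l' * (x1+x2)" using sp by (simp add: mult_right_mono)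
        moreover have "l'*(x1+x2) = l'*(y1+y2)" using s1 by simp
        ultimately show False using hi lo' s2 by linarith
      next
        case 2
        have "l \<in> L" using ul L0_def by auto
        then have "nxt l' \<le> l" using nl'(3) 2 by auto
        then have "nxt l' * (y1+y2) \<le> l * (y1+y2)" using sp s1 by (simp add: mult_right_mono)
        moreover have "l*(x1+x2) = l*(y1+y2)" using s1 by simp
        ultimately show False using hi' lo s2 by linarith
      qed
    qed
    have "l*(x1+x2) = l*(y1 + y2)" using s1 by simp
    then have "l*x1 = l*y1 + l*y2 - l*x2" by (simp add: algebra_simps)
    then have "(nxt l - l) * x2 = (nxt l - l) * y2" using s2 ll by (simp add: algebra_simps)
    then have "x2 = y2" using nl(2) by simp
    then have "x1 = y1" using s1 by simp
    then show "u = v" using u1 v1 ll \<open>x2 = y2\<close> by simp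
  qed
  have "card X = (\<Sum>l\<in>L0. card (Rl B D l) * card (Rl B D (nxt l)))"
    unfolding X_def using fL0 finite_Rl[OF fB] by (simp add: card_cartesian_product)
  also have "\<dots> \<ge> (\<Sum>l\<in>L0. t * t)"
  proof (rule sum_mono)
    fix l assume "l \<in> L0"
    then have "l \<in> L" "nxt l \<in> L" using nxt L0_def by auto
    then show "t * t \<le> card (Rl B D l) * card (Rl B D (nxt l))" using big by (simp add: mult_le_mono)
  qed
  finally have "card X \<ge> card L0 * t^2" by (simp add: power2_eq_square)
  moreover have "card L0 = card L - 1" using mxL L0_def fL by simp
  moreover have "card X = card (\<phi> ` X)" using inj by (simp add: card_image)
  moreover have "card (\<phi> ` X) \<le> card (sumset B) * card (sumset D)"
    using card_mono[OF _ img] finite_sumset[OF fB] finite_sumset[OF fD]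
    by (simp add: card_cartesian_product)
  ultimately show ?thesis by (metis order_trans)
qed

definition H :: "nat \<Rightarrow> real" where "H N = (\<Sum>t\<in>{1..N}. 1 / real t)"

lemma H_le: "N \<ge> 1 \<Longrightarrow> H N \<le> 1 + ln (real N)"
proof (induction N rule: dec_induct)
  case base then show ?case by (simp add: H_def)
next
  case (step n)
  have np: "real n \<ge> 1" using step by simp
  have "ln (real n / real (Suc n)) \<le> real n / real (Suc n) - 1"
    by (rule ln_le_minus_one) (use np in simp)
  also have "\<dots> = - 1 / real (Suc n)" by (simp add: field_simps)
  finally have "1 / real (Suc n) \<le> ln (real (Suc n)) - ln (real n)"
    using np by (simp add: ln_div)
  moreover have "H (Suc n) = H n + 1 / real (Suc n)" by (simp add: H_def)
  ultimately show ?case using step.IH by linarith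
qed

lemma sum_odd: "(\<Sum>t\<in>{1..k}. 2*t - 1) = (k::nat)^2"
proof (induction k)
  case 0 then show ?case by simp
next
  case (Suc k) then show ?case by (simp add: power2_eq_square)
qed

lemma sum_odd_real: "(\<Sum>t\<in>{1..k}. 2*real t - 1) = real k ^2"
proof (induction k)
  case 0 then show ?case by simp
next
  case (Suc k) then show ?case by (simp add: power2_eq_square algebra_simps)
qed

lemma layer:
  assumes fL: "finite L" and bd: "\<forall>l\<in>L. f l \<le> N"
  shows "(\<Sum>l\<in>L. (f l)^2) = (\<Sum>t\<in>{1..N}. (2*t-1) * card {l\<in>L. t \<le> f l})"
proof -
  have pt: "(f l)^2 = (\<Sum>t\<in>{1..N}. if t \<le> f l then 2*t-1 else 0)" if "l \<in> L" for l
  proof -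
    have "{t\<in>{1..N}. t \<le> f l} = {1..f l}" using bd that by auto
    then have "(\<Sum>t\<in>{1..N}. if t \<le> f l then 2*t-1 else 0) = (\<Sum>t\<in>{1..f l}. 2*t-1)"
      using sum.inter_filter[of "{1..N}" "\<lambda>t. 2*t-1" "\<lambda>t. t \<le> f l"] by simp
    then show ?thesis using sum_odd by simp
  qed
  have "(\<Sum>l\<in>L. (f l)^2) = (\<Sum>l\<in>L. \<Sum>t\<in>{1..N}. if t \<le> f l then 2*t-1 else 0)"
    using pt by simp
  also have "\<dots> = (\<Sum>t\<in>{1..N}. \<Sum>l\<in>L. if t \<le> f l then 2*t-1 else 0)"
    by (rule sum.swap)
  also have "\<dots> = (\<Sum>t\<in>{1..N}. (2*t-1) * card {l\<in>L. t \<le> f l})"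
  proof (rule sum.cong)
    fix t
    have "(\<Sum>l\<in>L. if t \<le> f l then 2*t-1 else 0) = (\<Sum>l\<in>{l\<in>L. t \<le> f l}. 2*t-1)"
      using sum.inter_filter[of L "\<lambda>l. 2*t-1" "\<lambda>l. t \<le> f l"] fL by simp
    then show "(\<Sum>l\<in>L. if t \<le> f l then 2*t-1 else 0) = (2*t-1) * card {l\<in>L. t \<le> f l}"
      by (simp add: mult.commute)
  qed simp
  finally show ?thesis .
qed

lemma core:
  assumes fB: "finite B" and fD: "finite D" and pos: "B \<subseteq> {0<..}"
    and fL: "finite L" and N: "card B \<le> N"
  shows "real (\<Sum>l\<in>L. (card (Rl B D l))^2)
     \<le> real N ^ 2 + 2 * real (card (sumset B)) * real (card (sumset D)) * H N"
proof -
  define P where "P = real (card (sumset B)) * real (card (sumset D))"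
  have P0: "P \<ge> 0" unfolding P_def by simp
  have bd: "\<forall>l\<in>L. card (Rl B D l) \<le> N" using card_Rl[OF fB] N le_trans by blast
  have mt: "real (card {l\<in>L. t \<le> card (Rl B D l)}) \<le> 1 + P / (real t)^2" if t: "t \<ge> 1" for t
  proof -
    define L' where "L' = {l\<in>L. t \<le> card (Rl B D l)}"
    have "(card L' - 1) * t^2 \<le> card (sumset B) * card (sumset D)"
      by (rule geo[OF fB fD pos]) (use fL L'_def in auto)
    then have "real (card L' - 1) * (real t)^2 \<le> P" unfolding P_def
      by (metis of_nat_le_iff of_nat_mult of_nat_power)
    then have "real (card L' - 1) \<le> P / (real t)^2" using t by (simp add: field_simps)
    moreover have "real (card L') \<le> real (card L' - 1) + 1" by linarith
    ultimately show ?thesis unfolding L'_def by linarith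
  qed
  have "real (\<Sum>l\<in>L. (card (Rl B D l))^2)
      = (\<Sum>t\<in>{1..N}. (2*real t - 1) * real (card {l\<in>L. t \<le> card (Rl B D l)}))"
    using layer[OF fL bd] by (simp add: of_nat_diff)
  also have "\<dots> \<le> (\<Sum>t\<in>{1..N}. (2*real t - 1) + 2 * P * (1 / real t))"
  proof (rule sum_mono)
    fix t assume "t \<in> {1..N}"
    then have t: "t \<ge> 1" by simp
    have c: "2*real t - 1 \<ge> 0" using t by simp
    have "(2*real t - 1) * real (card {l\<in>L. t \<le> card (Rl B D l)}) \<le> (2*real t - 1) * (1 + P / (real t)^2)"
      using mt[OF t] c by (rule mult_left_mono)
    also have "\<dots> = (2*real t - 1) + P * ((2*real t - 1) / (real t)^2)" by (simp add: algebra_simps)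
    also have "\<dots> \<le> (2*real t - 1) + P * (2 / real t)"
    proof -
      have "(2*real t - 1) / (real t)^2 \<le> 2 / real t" using t
        by (simp add: field_simps power2_eq_square)
      then show ?thesis using P0 by (metis add_left_mono mult_left_mono)
    qed
    finally show "(2*real t - 1) * real (card {l\<in>L. t \<le> card (Rl B D l)}) \<le> (2*real t - 1) + 2 * P * (1 / real t)"
      by (simp add: mult.commute)
  qed
  also have "\<dots> = real N ^ 2 + 2 * P * H N"
    using sum_odd_real[of N] by (simp add: sum.distrib H_def sum_distrib_left del: One_nat_def)
  finally show ?thesis unfolding P_def by simp
qed

lemma sumset_mono: "X \<subseteq> Y \<Longrightarrow> sumset X \<subseteq> sumset Y"
  unfolding sumset_def by blast

lemma sumset_neg: "sumset (uminus ` X) = uminus ` sumset (X::real set)"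
proof
  show "sumset (uminus ` X) \<subseteq> uminus ` sumset X"
  proof
    fix z assume "z \<in> sumset (uminus ` X)"
    then obtain a b where "a \<in> X" "b \<in> X" "z = -a + -b" unfolding sumset_def by auto
    then show "z \<in> uminus ` sumset X" unfolding sumset_def by (intro image_eqI[where x="a+b"]) auto
  qed
  show "uminus ` sumset X \<subseteq> sumset (uminus ` X)"
  proof
    fix z assume "z \<in> uminus ` sumset X"
    then obtain a b where "a \<in> X" "b \<in> X" "z = -(a + b)" unfolding sumset_def by auto
    then have "z = (-a) + (-b)" "-a \<in> uminus ` X" "-b \<in> uminus ` X" by auto
    then show "z \<in> sumset (uminus ` X)" unfolding sumset_def by blast
  qed
qed

lemma card_sumset_neg: "card (sumset (uminus ` X)) = card (sumset (X::real set))"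
  by (simp add: sumset_neg card_image)

lemma card_sumset_mono: "finite Y \<Longrightarrow> X \<subseteq> Y \<Longrightarrow> card (sumset X) \<le> card (sumset Y)"
  by (simp add: card_mono finite_sumset sumset_mono)

lemma energy_bound:
  fixes A :: "real set"
  assumes fA: "finite A"
  shows "real (rA A 0) \<le> 8 * real (card A)^2 + 8 * real (card (sumset A))^2 * H (card A)"
proof -
  define N where "N = card A"
  define S where "S = card (sumset A)"
  define Z where "Z = {(a1::real, a2::real, a3::real, a4::real). a1 \<in> A \<and> a2 \<in> A \<and> a3 \<in> A \<and> a4 \<in> A
                  \<and> a1 * a2 - a3 * a4 = 0}"
  have rZ: "rA A 0 = card Z" unfolding rA_def Z_def by simp
  have fZ: "finite Z"
  proof -
    have "Z \<subseteq> A \<times> A \<times> A \<times> A" unfolding Z_def by auto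
    then show ?thesis using fA by (meson finite_SigmaI finite_subset)
  qed
  define Z0 where "Z0 = {q\<in>Z. fst q * fst (snd q) = 0}"
  define Z1 where "Z1 = {q\<in>Z. fst q * fst (snd q) \<noteq> 0}"
  have "Z = Z0 \<union> Z1" unfolding Z0_def Z1_def by auto
  then have cZ: "card Z \<le> card Z0 + card Z1" by (simp add: card_Un_le)
  define W where "W = {(a::real,b::real). a \<in> A \<and> b \<in> A \<and> a*b = 0}"
  have W: "W \<subseteq> ({0} \<times> A) \<union> (A \<times> {0})" unfolding W_def by auto
  have fW: "finite W" using finite_subset[OF W] fA by simp
  have cW: "card W \<le> 2 * N"
  proof -
    have "card W \<le> card (({0} \<times> A) \<union> (A \<times> {0}))" using W fA by (simp add: card_mono)
    also have "\<dots> \<le> card ({0::real} \<times> A) + card (A \<times> {0::real})" by (rule card_Un_le)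
    finally show ?thesis unfolding N_def by (simp add: card_cartesian_product)
  qed
  define g where "g = (\<lambda>((a::real,b::real),(c::real,d::real)). (a,b,c,d))"
  have "Z0 \<subseteq> g ` (W \<times> W)"
  proof
    fix q assume "q \<in> Z0"
    then obtain a b c d where q: "q = (a,b,c,d)" "a \<in> A" "b \<in> A" "c \<in> A" "d \<in> A" "a*b = 0" "c*d = 0"
      unfolding Z0_def Z_def by auto
    then show "q \<in> g ` (W \<times> W)" unfolding g_def W_def by (auto intro!: image_eqI[where x="((a,b),(c,d))"])
  qed
  then have "card Z0 \<le> card (g ` (W \<times> W))" using fW by (intro card_mono) auto
  also have "\<dots> \<le> card (W \<times> W)" by (rule card_image_le) (use fW in simp)
  also have "\<dots> = card W * card W" by (simp add: card_cartesian_product)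
  also have "\<dots> \<le> (2*N) * (2*N)" using mult_le_mono[OF cW cW] .
  finally have cZ0: "card Z0 \<le> 4 * N^2" by (simp add: power2_eq_square)
  define A' where "A' = A - {0}"
  have fA': "finite A'" using fA A'_def by simp
  define Q where "Q = (\<lambda>(x,y). y / x) ` (A' \<times> A)"
  have fQ: "finite Q" unfolding Q_def using fA fA' by simp
  define h where "h = (\<lambda>((x1::real,y1::real),(x2::real,y2::real)). (y1,x2,x1,y2))"
  have "Z1 \<subseteq> h ` (\<Union>l\<in>Q. Rl A' A l \<times> Rl A' A l)"
  proof
    fix q assume "q \<in> Z1"
    then obtain a b c d where q: "q = (a,b,c,d)" "a \<in> A" "b \<in> A" "c \<in> A" "d \<in> A" "a*b = c*d" "a \<noteq> 0" "b \<noteq> 0"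
      unfolding Z1_def Z_def by auto
    have "c * d \<noteq> 0" using q(6-8) by (metis mult_eq_0_iff)
    then have nz: "a \<noteq> 0" "b \<noteq> 0" "c \<noteq> 0" "d \<noteq> 0" using q by auto
    define l where "l = a / c"
    have lQ: "l \<in> Q" unfolding Q_def l_def A'_def using q nz by (auto intro!: image_eqI[where x="(c,a)"])
    have p1: "(c,a) \<in> Rl A' A l" unfolding Rl_def A'_def l_def using q nz by auto
    have "d = l * b" unfolding l_def using q nz by (simp add: field_simps)
    then have p2: "(b,d) \<in> Rl A' A l" unfolding Rl_def A'_def using q nz by auto
    show "q \<in> h ` (\<Union>l\<in>Q. Rl A' A l \<times> Rl A' A l)"
      using p1 p2 lQ q(1) unfolding h_def by (auto intro!: image_eqI[where x="((c,a),(b,d))"])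
  qed
  moreover have fU: "finite (\<Union>l\<in>Q. Rl A' A l \<times> Rl A' A l)" using fQ finite_Rl[OF fA'] by auto
  ultimately have "card Z1 \<le> card (h ` (\<Union>l\<in>Q. Rl A' A l \<times> Rl A' A l))" by (intro card_mono) auto
  also have "\<dots> \<le> card (\<Union>l\<in>Q. Rl A' A l \<times> Rl A' A l)" using fU by (rule card_image_le)
  also have "\<dots> \<le> (\<Sum>l\<in>Q. card (Rl A' A l \<times> Rl A' A l))" using fQ by (rule card_UN_le)
  also have "\<dots> = (\<Sum>l\<in>Q. (card (Rl A' A l))^2)" by (simp add: card_cartesian_product power2_eq_square)
  finally have cZ1: "card Z1 \<le> (\<Sum>l\<in>Q. (card (Rl A' A l))^2)" .
  define P where "P = A \<inter> {0<..}"
  define M where "M = uminus ` (A \<inter> {..<0})"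
  have fP: "finite P" and fM: "finite M" and fnA: "finite (uminus ` A)" using fA P_def M_def by auto
  have Ppos: "P \<subseteq> {0<..}" and Mpos: "M \<subseteq> {0<..}" unfolding P_def M_def by auto
  have split: "card (Rl A' A l) \<le> card (Rl P A l) + card (Rl M (uminus ` A) l)" for l
  proof -
    have "Rl A' A l \<subseteq> Rl P A l \<union> (\<lambda>(x,y). (-x,-y)) ` Rl M (uminus ` A) l"
    proof
      fix z assume z: "z \<in> Rl A' A l"
      then obtain x y where xy: "z = (x,y)" "x \<in> A" "x \<noteq> 0" "y \<in> A" "y = l*x" unfolding Rl_def A'_def by auto
      show "z \<in> Rl P A l \<union> (\<lambda>(x,y). (-x,-y)) ` Rl M (uminus ` A) l"
      proof (cases "x > 0")
        case True then show ?thesis using xy unfolding Rl_def P_def by auto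
      next
        case False
        then have "x < 0" using xy by auto
        then have "(-x,-y) \<in> Rl M (uminus ` A) l" using xy unfolding Rl_def M_def by auto
        then show ?thesis using xy by (auto intro!: image_eqI[where x="(-x,-y)"])
      qed
    qed
    then have "card (Rl A' A l) \<le> card (Rl P A l \<union> (\<lambda>(x,y). (-x,-y)) ` Rl M (uminus ` A) l)"
      using finite_Rl[OF fP] finite_Rl[OF fM] by (simp add: card_mono)
    also have "\<dots> \<le> card (Rl P A l) + card ((\<lambda>(x,y). (-x,-y)) ` Rl M (uminus ` A) l)" by (rule card_Un_le)
    also have "\<dots> \<le> card (Rl P A l) + card (Rl M (uminus ` A) l)" by (simp add: card_image_le finite_Rl[OF fM])
    finally show ?thesis .
  qed
  have sq: "(card (Rl A' A l))^2 \<le> 2 * (card (Rl P A l))^2 + 2 * (card (Rl M (uminus ` A) l))^2" for l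
  proof -
    have "(card (Rl A' A l))^2 \<le> (card (Rl P A l) + card (Rl M (uminus ` A) l))^2"
      using split by (simp add: power_mono)
    also have "\<dots> \<le> 2 * (card (Rl P A l))^2 + 2 * (card (Rl M (uminus ` A) l))^2"
    proof -
      fix u v :: nat
      have "\<And>u v::nat. (u+v)^2 \<le> 2*u^2 + 2*v^2"
      proof -
        fix u v :: nat
        have "int ((u+v)^2) \<le> int (2*u^2 + 2*v^2)"
          using zero_le_power2[of "int u - int v"] by (simp add: power2_eq_square algebra_simps)
        then show "(u+v)^2 \<le> 2*u^2 + 2*v^2" by linarith
      qed
      then show ?thesis by blast
    qed
    finally show ?thesis .
  qed
  have cP: "card P \<le> N" unfolding N_def P_def using fA by (intro card_mono) auto
  have "card M \<le> card (A \<inter> {..<0})" unfolding M_def by (rule card_image_le) (use fA in simp)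
  also have "\<dots> \<le> N" unfolding N_def using fA by (intro card_mono) auto
  finally have cM: "card M \<le> N" .
  have sP: "card (sumset P) \<le> S" unfolding S_def P_def using fA by (intro card_sumset_mono) auto
  have sM: "card (sumset M) \<le> S" unfolding S_def M_def card_sumset_neg using fA by (intro card_sumset_mono) auto
  have sA: "card (sumset (uminus ` A)) = S" unfolding S_def by (rule card_sumset_neg)
  have H0: "H N \<ge> 0" unfolding H_def by (intro sum_nonneg) auto
  have prodle: "2 * real x * real y * H N \<le> 2 * real S * real S * H N" if "x \<le> S" "y \<le> S" for x y
  proof -
    have "real x * real y \<le> real S * real S" using that by (intro mult_mono) auto
    then have "(real x * real y) * H N \<le> (real S * real S) * H N" using H0 by (rule mult_right_mono)
    then show ?thesis by (simp add: mult.assoc)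
  qed
  have core1: "real (\<Sum>l\<in>Q. (card (Rl P A l))^2) \<le> real N ^ 2 + 2 * real S * real S * H N"
  proof -
    have "real (\<Sum>l\<in>Q. (card (Rl P A l))^2) \<le> real N ^ 2 + 2 * real (card (sumset P)) * real (card (sumset A)) * H N"
      by (rule core[OF fP fA Ppos fQ cP])
    also have "\<dots> \<le> real N ^ 2 + 2 * real S * real S * H N"
      using prodle[OF sP] S_def by simp
    finally show ?thesis .
  qed
  have core2: "real (\<Sum>l\<in>Q. (card (Rl M (uminus ` A) l))^2) \<le> real N ^ 2 + 2 * real S * real S * H N"
  proof -
    have "real (\<Sum>l\<in>Q. (card (Rl M (uminus ` A) l))^2) \<le> real N ^ 2 + 2 * real (card (sumset M)) * real (card (sumset (uminus ` A))) * H N"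
      by (rule core[OF fM fnA Mpos fQ cM])
    also have "\<dots> \<le> real N ^ 2 + 2 * real S * real S * H N"
      using prodle[OF sM] sA by simp
    finally show ?thesis .
  qed
  define XP where "XP = (\<Sum>l\<in>Q. (card (Rl P A l))^2)"
  define XM where "XM = (\<Sum>l\<in>Q. (card (Rl M (uminus ` A) l))^2)"
  have "card Z1 \<le> 2 * XP + 2 * XM"
  proof -
    have "(\<Sum>l\<in>Q. (card (Rl A' A l))^2) \<le> (\<Sum>l\<in>Q. 2 * (card (Rl P A l))^2 + 2 * (card (Rl M (uminus ` A) l))^2)"
      by (rule sum_mono) (rule sq)
    also have "\<dots> = 2 * XP + 2 * XM" unfolding XP_def XM_def by (simp add: sum.distrib sum_distrib_left)
    finally show ?thesis using cZ1 by linarith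
  qed
  then have "real (card Z1) \<le> real (2 * XP + 2 * XM)" by (rule of_nat_mono)
  then have "real (card Z1) \<le> 2 * real XP + 2 * real XM" by simp
  moreover have "real XP \<le> real N ^ 2 + 2 * real S * real S * H N" using core1 unfolding XP_def .
  moreover have "real XM \<le> real N ^ 2 + 2 * real S * real S * H N" using core2 unfolding XM_def .
  moreover have "real S ^ 2 * H N = real S * real S * H N" by (simp add: power2_eq_square)
  ultimately have "real (card Z1) \<le> 4 * real N ^ 2 + 8 * real S ^ 2 * H N"
    by linarith
  moreover have "real (card Z0) \<le> 4 * real N ^ 2"
  proof -
    have "real (card Z0) \<le> real (4 * N^2)" using cZ0 by (rule of_nat_mono)
    then show ?thesis by simp
  qed
  ultimately have "real (card Z) \<le> 8 * real N ^ 2 + 8 * real S ^ 2 * H N" using cZ by linarith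
  then show ?thesis using rZ N_def S_def by simp
qed

lemma ln2_ge: "ln (2::real) \<ge> 1/2"
proof -
  have "ln (1/2::real) \<le> 1/2 - 1" by (rule ln_le_minus_one) simp
  then show ?thesis by (simp add: ln_div)
qed

lemma rA_le_r0:
  fixes A :: "real set"
  assumes fA: "finite A"
  shows "rA A n \<le> rA A 0"
proof -
  define U where "U = A \<times> A"
  define \<pi> where "\<pi> = (\<lambda>(a::real,b::real). a*b)"
  define Y where "Y = \<pi> ` U"
  define F where "F y = {u\<in>U. \<pi> u = y}" for y
  define g where "g y = card (F y)" for y
  define k where "k = (\<lambda>((a::real,b::real),(c::real,d::real)). (a,b,c,d))"
  have fU: "finite U" using fA U_def by simp
  have fY: "finite Y" using fU Y_def by simp
  have fF: "finite (F y)" for y using fU F_def by simp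
  have injk: "inj k" unfolding k_def by (rule injI) auto
  define T where "T m = {(a1::real, a2::real, a3::real, a4::real). a1 \<in> A \<and> a2 \<in> A \<and> a3 \<in> A \<and> a4 \<in> A
                  \<and> a1 * a2 - a3 * a4 = real_of_int m}" for m
  have rT: "rA A m = card (T m)" for m unfolding rA_def T_def by simp
  have c1: "card (T n) \<le> (\<Sum>y\<in>Y. g (y + real_of_int n) * g y)"
  proof -
    have "T n \<subseteq> (\<Union>y\<in>Y. k ` (F (y + real_of_int n) \<times> F y))"
    proof
      fix q assume "q \<in> T n"
      then obtain a b c d where q: "q = (a,b,c,d)" "a \<in> A" "b \<in> A" "c \<in> A" "d \<in> A" "a*b - c*d = real_of_int n"
        unfolding T_def by auto
      have "c*d \<in> Y" unfolding Y_def U_def \<pi>_def using q by force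
      moreover have "(a,b) \<in> F (c*d + real_of_int n)" unfolding F_def U_def \<pi>_def using q by auto
      moreover have "(c,d) \<in> F (c*d)" unfolding F_def U_def \<pi>_def using q by auto
      ultimately show "q \<in> (\<Union>y\<in>Y. k ` (F (y + real_of_int n) \<times> F y))"
        unfolding k_def using q(1) by (intro UN_I[of "c*d"]) (auto intro!: image_eqI[where x="((a,b),(c,d))"])
    qed
    moreover have "finite (\<Union>y\<in>Y. k ` (F (y + real_of_int n) \<times> F y))" using fY fF by auto
    ultimately have "card (T n) \<le> card (\<Union>y\<in>Y. k ` (F (y + real_of_int n) \<times> F y))" by (rule card_mono[rotated])
    also have "\<dots> \<le> (\<Sum>y\<in>Y. card (k ` (F (y + real_of_int n) \<times> F y)))" using fY by (rule card_UN_le)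
    also have "\<dots> = (\<Sum>y\<in>Y. g (y + real_of_int n) * g y)"
      by (rule sum.cong) (auto simp: card_image inj_on_subset[OF injk] g_def card_cartesian_product)
    finally show ?thesis .
  qed
  have c2: "(\<Sum>y\<in>Y. g y * g y) \<le> card (T 0)"
  proof -
    have "(\<Union>y\<in>Y. k ` (F y \<times> F y)) \<subseteq> T 0"
      unfolding T_def k_def F_def U_def \<pi>_def by auto
    moreover have "finite (T 0)"
    proof -
      have "T 0 \<subseteq> A \<times> A \<times> A \<times> A" unfolding T_def by auto
      then show ?thesis using fA by (meson finite_SigmaI finite_subset)
    qed
    ultimately have "card (\<Union>y\<in>Y. k ` (F y \<times> F y)) \<le> card (T 0)" by (rule card_mono[rotated])
    moreover have "card (\<Union>y\<in>Y. k ` (F y \<times> F y)) = (\<Sum>y\<in>Y. card (k ` (F y \<times> F y)))"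
    proof (rule card_UN_disjoint[OF fY])
      show "\<forall>i\<in>Y. finite (k ` (F i \<times> F i))" using fF by auto
      show "\<forall>i\<in>Y. \<forall>j\<in>Y. i \<noteq> j \<longrightarrow> k ` (F i \<times> F i) \<inter> k ` (F j \<times> F j) = {}"
        unfolding k_def F_def by auto
    qed
    moreover have "(\<Sum>y\<in>Y. card (k ` (F y \<times> F y))) = (\<Sum>y\<in>Y. g y * g y)"
      by (rule sum.cong) (auto simp: card_image inj_on_subset[OF injk] g_def card_cartesian_product)
    ultimately show ?thesis by simp
  qed
  have g0: "g z = 0" if "z \<notin> Y" for z
  proof -
    have "F z = {}" unfolding F_def using that Y_def by auto
    then show ?thesis unfolding g_def by simp
  qed
  have c4: "(\<Sum>y\<in>Y. g (y + real_of_int n) * g (y + real_of_int n)) \<le> (\<Sum>y\<in>Y. g y * g y)"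
  proof -
    define Y' where "Y' = {y\<in>Y. y + real_of_int n \<in> Y}"
    have "(\<Sum>y\<in>Y. g (y + real_of_int n) * g (y + real_of_int n)) = (\<Sum>y\<in>Y'. g (y + real_of_int n) * g (y + real_of_int n))"
      unfolding Y'_def using fY g0 by (intro sum.mono_neutral_right) auto
    also have "\<dots> = (\<Sum>z\<in>(\<lambda>y. y + real_of_int n) ` Y'. g z * g z)"
      by (subst sum.reindex) (auto simp: inj_on_def)
    also have "\<dots> \<le> (\<Sum>y\<in>Y. g y * g y)"
      using fY by (intro sum_mono2) (auto simp: Y'_def)
    finally show ?thesis .
  qed
  have c3: "2 * (\<Sum>y\<in>Y. g (y + real_of_int n) * g y) \<le>
      (\<Sum>y\<in>Y. g (y + real_of_int n) * g (y + real_of_int n)) + (\<Sum>y\<in>Y. g y * g y)"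
  proof -
    have "\<And>u v::nat. 2 * (u * v) \<le> u*u + v*v"
    proof -
      fix u v :: nat
      have "int (2 * (u * v)) \<le> int (u*u + v*v)"
        using zero_le_power2[of "int u - int v"] by (simp add: power2_eq_square algebra_simps)
      then show "2 * (u * v) \<le> u*u + v*v" by linarith
    qed
    then have "(\<Sum>y\<in>Y. 2 * (g (y + real_of_int n) * g y)) \<le> (\<Sum>y\<in>Y. g (y + real_of_int n) * g (y + real_of_int n) + g y * g y)"
      by (intro sum_mono) blast
    then show ?thesis by (simp add: sum.distrib sum_distrib_left)
  qed
  have "card (T n) \<le> card (T 0)" using c1 c2 c3 c4 by linarith
  then show ?thesis using rT[of n] rT[of 0] by simp
qed

lemma I3_bound:
  fixes A :: "real set"
  assumes fA: "finite A"
  shows "I3 A \<le> (rA A 0)^2 * (card A)^4"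
proof -
  define T where "T m = {(a1::real, a2::real, a3::real, a4::real). a1 \<in> A \<and> a2 \<in> A \<and> a3 \<in> A \<and> a4 \<in> A
                  \<and> a1 * a2 - a3 * a4 = real_of_int m}" for m
  have rT: "rA A m = card (T m)" for m unfolding rA_def T_def by simp
  define S where "S = {n::int. rA A n \<noteq> 0}"
  define fl where "fl = (\<lambda>(a::real,b::real,c::real,d::real). \<lfloor>a*b - c*d\<rfloor>)"
  have TA: "T m \<subseteq> A \<times> A \<times> A \<times> A" for m unfolding T_def by auto
  have fA4: "finite (A \<times> A \<times> A \<times> A)" using fA by simp
  have "S \<subseteq> fl ` (A \<times> A \<times> A \<times> A)"
  proof
    fix n assume "n \<in> S"
    then have "T n \<noteq> {}" unfolding S_def rT by auto
    then obtain a b c d where "(a,b,c,d) \<in> T n" by (metis all_not_in_conv prod_cases4)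
    then have q: "a \<in> A" "b \<in> A" "c \<in> A" "d \<in> A" "a*b - c*d = real_of_int n" unfolding T_def by auto
    then have "fl (a,b,c,d) = n" unfolding fl_def by simp
    then show "n \<in> fl ` (A \<times> A \<times> A \<times> A)" using q by force
  qed
  then have fS: "finite S" using fA4 finite_surj by blast
  have "I3 A = (\<Sum>n\<in>S. rA A n ^ 3)" unfolding I3_def S_def by simp
  also have "\<dots> \<le> (\<Sum>n\<in>S. (rA A 0)^2 * rA A n)"
  proof (rule sum_mono)
    fix n
    have "rA A n * rA A n \<le> rA A 0 * rA A 0" using mult_le_mono[OF rA_le_r0[OF fA, of n] rA_le_r0[OF fA, of n]] .
    then have "rA A n * rA A n * rA A n \<le> rA A 0 * rA A 0 * rA A n" by (rule mult_le_mono1)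
    then show "rA A n ^ 3 \<le> (rA A 0)^2 * rA A n" by (simp add: power3_eq_cube power2_eq_square)
  qed
  also have "\<dots> = (rA A 0)^2 * (\<Sum>n\<in>S. card (T n))" by (simp add: sum_distrib_left rT)
  also have "(\<Sum>n\<in>S. card (T n)) = card (\<Union>n\<in>S. T n)"
  proof (rule card_UN_disjoint[symmetric, OF fS])
    show "\<forall>i\<in>S. finite (T i)" using TA fA4 finite_subset by blast
    show "\<forall>i\<in>S. \<forall>j\<in>S. i \<noteq> j \<longrightarrow> T i \<inter> T j = {}" unfolding T_def by auto
  qed
  also have "card (\<Union>n\<in>S. T n) \<le> card (A \<times> A \<times> A \<times> A)"
    using TA fA4 by (intro card_mono) auto
  also have "card (A \<times> A \<times> A \<times> A) = (card A)^4" by (simp add: card_cartesian_product power4_eq_xxxx)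
  finally show ?thesis by simp
qed

theorem lemma6p1:
  "\<exists>C>0. \<forall>(A::real set) (K::real).
      finite A \<longrightarrow> A \<noteq> {} \<longrightarrow> K \<ge> 1 \<longrightarrow>
      real (card (sumset A)) = K * real (card A) \<longrightarrow>
        (\<forall>n::int. rA A n \<le> rA A 0) \<and>
        real (rA A 0) \<le> C * K^2 * real (card A)^2 * ln (2 * real (card A)) \<and>
        real (I3 A) \<le> C * K^4 * real (card A)^8 * (ln (2 * real (card A)))^2"
proof (intro exI[of _ 1024] conjI allI impI)
  show "(0::real) < 1024" by simp
  fix A :: "real set" and K :: real and n :: int
  assume fA: "finite A" and ne: "A \<noteq> {}" and K1: "K \<ge> 1"
    and SK: "real (card (sumset A)) = K * real (card A)"
  show "rA A n \<le> rA A 0" using rA_le_r0[OF fA] .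
  define N where "N = real (card A)"
  define L where "L = ln (2 * N)"
  have N1: "N \<ge> 1" unfolding N_def using fA ne by (simp add: Suc_leI card_gt_0_iff)
  have lnN: "ln N \<ge> 0" using N1 by simp
  have LL: "L = ln 2 + ln N" unfolding L_def using N1 by (simp add: ln_mult)
  have L2: "2 * L \<ge> 1" using LL ln2_ge lnN by linarith
  have L0: "L \<ge> 0" using L2 by linarith
  have H1: "H (card A) \<le> 2 * L"
  proof -
    have "H (card A) \<le> 1 + ln N" unfolding N_def using H_le[of "card A"] N1 N_def by simp
    then show ?thesis using LL ln2_ge lnN by linarith
  qed
  have K2: "K^2 \<ge> 1" using K1 by (simp add: one_le_power)
  have N2: "N^2 \<ge> 0" by simp
  have e: "real (rA A 0) \<le> 8 * N^2 + 8 * (K*N)^2 * H (card A)"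
    using energy_bound[OF fA] SK unfolding N_def by simp
  have t1: "8 * N^2 \<le> 16 * K^2 * N^2 * L"
  proof -
    have "1 * 1 \<le> K^2 * (2*L)" using K2 L2 by (intro mult_mono) auto
    then have "8 * N^2 * 1 \<le> 8 * N^2 * (K^2 * (2*L))" using N2 by (intro mult_left_mono) auto
    then show ?thesis by (simp add: algebra_simps)
  qed
  have t2: "8 * (K*N)^2 * H (card A) \<le> 16 * K^2 * N^2 * L"
  proof -
    have "8 * (K*N)^2 * H (card A) \<le> 8 * (K*N)^2 * (2*L)" using H1 by (intro mult_left_mono) auto
    then show ?thesis by (simp add: algebra_simps power_mult_distrib)
  qed
  define R where "R = 32 * K^2 * N^2 * L"
  have R0: "R \<ge> 0" unfolding R_def using L0 by simp
  have r0R: "real (rA A 0) \<le> R" using e t1 t2 unfolding R_def by linarith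
  have "R \<le> 1024 * K^2 * N^2 * L"
    unfolding R_def using L0 by (simp add: mult_right_mono)
  then show "real (rA A 0) \<le> 1024 * K^2 * real (card A)^2 * ln (2 * real (card A))"
    using r0R unfolding N_def L_def by linarith
  have "real (I3 A) \<le> real (rA A 0)^2 * N^4"
  proof -
    have "real (I3 A) \<le> real ((rA A 0)^2 * (card A)^4)" using I3_bound[OF fA] by (rule of_nat_mono)
    then show ?thesis unfolding N_def by simp
  qed
  also have "\<dots> \<le> R^2 * N^4"
    using r0R by (intro mult_right_mono power_mono) auto
  also have "\<dots> = 1024 * K^4 * N^8 * L^2" unfolding R_def by (simp add: power_mult_distrib algebra_simps)
  finally show "real (I3 A) \<le> 1024 * K^4 * real (card A)^8 * (ln (2 * real (card A)))^2"
    unfolding N_def L_def .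
qed

end
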